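(* Every topologically mixing sofic shift space over a finite alphabet has the $\bar d$-shadowing property.
   Context: A sofic shift is the set of label sequences of infinite paths in a finite edge-labelled directed graph; $\mathcal L(X)$ denotes the set of finite words appearing in $X$. $X$ is topologically mixing if for all $u,w\in\mathcal L(X)$ there is $N$ such that for all $n\ge N$ there is $v$ with $|v|=n$ and $uvw\in\mathcal L(X)$. $\bar d(x,y)=\limsup_{n\to\infty}\frac1n|\{0\le j<n:x_j\ne y_j\}|$. $X$ has the $\bar d$-shadowing property if for every $\varepsilon>0$ there is $N\in\mathbb N$ such that for every sequence $(w^{(j)})_{j\ge1}$ of words in $\mathcal L(X)$ with $|w^{(j)}|\ge N$ there is $x'\in X$ with $\bar d(w^{(1)}w^{(2)}\cdots,x')<\varepsilon$. *)

theory Defs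
  imports "HOL-Analysis.Analysis" "HOL-Library.Liminf_Limsup"
begin

definition sofic_shift ::
  "'e set \<Rightarrow> ('e \<Rightarrow> 'v) \<Rightarrow> ('e \<Rightarrow> 'v) \<Rightarrow> ('e \<Rightarrow> 'a) \<Rightarrow> (nat \<Rightarrow> 'a) set" where
  "sofic_shift E src tgt lab =
     {x. \<exists>p :: nat \<Rightarrow> 'e. (\<forall>i. p i \<in> E \<and> tgt (p i) = src (p (Suc i))) \<and>
                         (\<forall>i. x i = lab (p i))}"

definition language :: "(nat \<Rightarrow> 'a) set \<Rightarrow> 'a list set" where
  "language X = {w. \<exists>x\<in>X. \<exists>i. w = map x [i..<i + length w]}"

definition top_mixing :: "(nat \<Rightarrow> 'a) set \<Rightarrow> bool" where
  "top_mixing X \<longleftrightarrow>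
     (\<forall>u\<in>language X. \<forall>w\<in>language X. \<exists>N. \<forall>n\<ge>N.
        \<exists>v. length v = n \<and> u @ v @ w \<in> language X)"

definition dbar :: "(nat \<Rightarrow> 'a) \<Rightarrow> (nat \<Rightarrow> 'a) \<Rightarrow> ereal" where
  "dbar x y = limsup (\<lambda>n. ereal (real (card {j. j < n \<and> x j \<noteq> y j}) / real n))"

text \<open>Concatenation w_0 w_1 w_2 ... of a sequence of nonempty words.\<close>
fun word_start :: "(nat \<Rightarrow> 'a list) \<Rightarrow> nat \<Rightarrow> nat" where
  "word_start ws 0 = 0"
| "word_start ws (Suc j) = word_start ws j + length (ws j)"

definition concat_words :: "(nat \<Rightarrow> 'a list) \<Rightarrow> nat \<Rightarrow> 'a" where
  "concat_words ws k =
     (let j = (LEAST j. k < word_start ws (Suc j)) in ws j ! (k - word_start ws j))"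

definition dbar_shadowing :: "(nat \<Rightarrow> 'a) set \<Rightarrow> bool" where
  "dbar_shadowing X \<longleftrightarrow>
     (\<forall>\<epsilon>>0. \<exists>N::nat. N \<ge> 1 \<and>
        (\<forall>ws :: nat \<Rightarrow> 'a list. (\<forall>j. ws j \<in> language X \<and> length (ws j) \<ge> N) \<longrightarrow>
           (\<exists>x'\<in>X. dbar (concat_words ws) x' < ereal \<epsilon>)))"

end

theory Submission imports Defs begin


definition isp :: "'e set \<Rightarrow> ('e \<Rightarrow> 'v) \<Rightarrow> ('e \<Rightarrow> 'v) \<Rightarrow> (nat \<Rightarrow> 'e) \<Rightarrow> bool" where
 "isp E src tgt q \<longleftrightarrow> (\<forall>i. q i \<in> E \<and> tgt (q i) = src (q (Suc i)))"
definition mt :: "('e \<Rightarrow> 'a) \<Rightarrow> 'a list \<Rightarrow> (nat \<Rightarrow> 'e) \<Rightarrow> bool" where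
 "mt lab P q \<longleftrightarrow> (\<forall>k<length P. lab (q k) = P ! k)"
definition spl :: "(nat \<Rightarrow> 'e) \<Rightarrow> nat \<Rightarrow> (nat \<Rightarrow> 'e) \<Rightarrow> nat \<Rightarrow> 'e" where
 "spl r m q = (\<lambda>k. if k < m then r k else q (k - m))"

lemma lang_char: "language (sofic_shift E src tgt lab) = {P. \<exists>q. isp E src tgt q \<and> mt lab P q}"
proof (intro set_eqI iffI)
  fix w assume "w \<in> language (sofic_shift E src tgt lab)"
  then obtain x i p where w: "w = map x [i..<i+length w]" and p: "\<forall>i. p i \<in> E \<and> tgt (p i) = src (p (Suc i))" "\<forall>i. x i = lab (p i)"
    unfolding language_def sofic_shift_def by blast
  have "isp E src tgt (\<lambda>k. p (k+i))" using p(1) unfolding isp_def by simp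
  moreover have "mt lab w (\<lambda>k. p (k+i))" unfolding mt_def
  proof (intro allI impI)
    fix k assume k: "k < length w"
    have "w ! k = (map x [i..<i+length w]) ! k" using w by (rule arg_cong)
    also have "\<dots> = x (i+k)" using k by simp
    finally show "lab (p (k+i)) = w ! k" using p(2) by (simp add: add.commute)
  qed
  ultimately show "w \<in> {P. \<exists>q. isp E src tgt q \<and> mt lab P q}" by blast
next
  fix w assume "w \<in> {P. \<exists>q. isp E src tgt q \<and> mt lab P q}"
  then obtain q where q: "isp E src tgt q" "mt lab w q" by blast
  have "(\<lambda>k. lab (q k)) \<in> sofic_shift E src tgt lab"
    using q(1) unfolding sofic_shift_def isp_def by blast
  moreover have "w = map (\<lambda>k. lab (q k)) [0..<0+length w]"
    using q(2) unfolding mt_def by (intro nth_equalityI) auto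
  ultimately show "w \<in> language (sofic_shift E src tgt lab)" unfolding language_def by blast
qed

lemma isp_shift: "isp E src tgt q \<Longrightarrow> isp E src tgt (\<lambda>k. q (k+m))"
  unfolding isp_def by simp

lemma mt_append: "mt lab (A@B) q \<longleftrightarrow> mt lab A q \<and> mt lab B (\<lambda>k. q (k + length A))"
  unfolding mt_def
proof safe
  fix k assume "\<forall>k<length (A @ B). lab (q k) = (A @ B) ! k" "k < length A"
  then show "lab (q k) = A ! k" by (auto simp: nth_append)
next
  fix k assume "\<forall>k<length (A @ B). lab (q k) = (A @ B) ! k" "k < length B"
  then show "lab (q (k + length A)) = B ! k"
    by (metis add.commute length_append nat_add_left_cancel_less nth_append_length_plus)
next
  fix k assume a: "\<forall>k<length A. lab (q k) = A ! k" "\<forall>k<length B. lab (q (k + length A)) = B ! k"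
    and k: "k < length (A @ B)"
  show "lab (q k) = (A @ B) ! k"
  proof (cases "k < length A")
    case True then show ?thesis using a by (simp add: nth_append)
  next
    case False
    then have "k = (k - length A) + length A" by simp
    then show ?thesis using a(2)[rule_format, of "k - length A"] k False by (simp add: nth_append)
  qed
qed

lemma isp_spl: assumes "isp E src tgt r" "isp E src tgt q" "q 0 = r m"
  shows "isp E src tgt (spl r m q)"
  unfolding isp_def spl_def
proof (intro allI conjI)
  fix i
  show "(if i < m then r i else q (i - m)) \<in> E" using assms unfolding isp_def by auto
  show "tgt (if i < m then r i else q (i - m)) = src (if Suc i < m then r (Suc i) else q (Suc i - m))"
  proof (cases "Suc i < m")
    case True then show ?thesis using assms(1) unfolding isp_def by auto
  next
    case False
    show ?thesis
    proof (cases "Suc i = m")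
      case True then show ?thesis using assms unfolding isp_def by (metis diff_self_eq_0 lessI not_less_iff_gr_or_eq)
    next
      case False2: False
      then have "i \<ge> m" "Suc i - m = Suc (i - m)" using False by auto
      then show ?thesis using assms(2) unfolding isp_def by auto
    qed
  qed
qed

lemma mt_spl: assumes "mt lab A r" "length A = m" "mt lab B q"
  shows "mt lab (A@B) (spl r m q)"
  unfolding mt_append
proof
  show "mt lab A (spl r m q)" using assms unfolding mt_def spl_def by auto
  show "mt lab B (\<lambda>k. spl r m q (k + length A))" using assms unfolding mt_def spl_def by auto
qed



definition TT where "TT E src tgt lab P = {q (length P) | q. isp E src tgt q \<and> mt lab P q}"
definition II where "II E src tgt lab w = {q 0 | q. isp E src tgt q \<and> mt lab w q}"

lemma transfer:
  assumes q: "isp E src tgt q" "mt lab (P'@v@w') q"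
    and T: "TT E src tgt lab P' = TT E src tgt lab P" and I: "II E src tgt lab w' = II E src tgt lab w"
  shows "\<exists>r. isp E src tgt r \<and> mt lab (P@v@w) r"
proof -
  have m1: "mt lab P' q" and m2: "mt lab (v@w') (\<lambda>k. q (k + length P'))"
    using q(2) unfolding mt_append by auto
  have "q (length P') \<in> TT E src tgt lab P" using T q(1) m1 unfolding TT_def by blast
  then obtain q1 where q1: "isp E src tgt q1" "mt lab P q1" "q1 (length P) = q (length P')"
    unfolding TT_def by auto
  define r where "r = spl q1 (length P) (\<lambda>k. q (k + length P'))"
  have r1: "isp E src tgt r" unfolding r_def
    by (rule isp_spl[OF q1(1) isp_shift[OF q(1)]]) (simp add: q1(3))
  have "mt lab (P@(v@w')) r" unfolding r_def by (rule mt_spl[OF q1(2) refl m2])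
  then have r2: "mt lab ((P@v)@w') r" by simp
  then have r3: "mt lab (P@v) r" and r4: "mt lab w' (\<lambda>k. r (k + length (P@v)))"
    unfolding mt_append[of lab "P@v"] by auto
  have "r (length (P@v)) \<in> II E src tgt lab w" using I isp_shift[OF r1] r4 unfolding II_def by force
  then obtain q2 where q2: "isp E src tgt q2" "mt lab w q2" "q2 0 = r (length (P@v))"
    unfolding II_def by auto
  have "isp E src tgt (spl r (length (P@v)) q2)" by (rule isp_spl[OF r1 q2(1) q2(3)])
  moreover have "mt lab ((P@v)@w) (spl r (length (P@v)) q2)" by (rule mt_spl[OF r3 refl q2(2)])
  ultimately show ?thesis by auto
qed


lemma uniform:
  assumes fin: "finite E" and mix: "top_mixing (sofic_shift E src tgt lab)"
  shows "\<exists>K. \<forall>P\<in>language (sofic_shift E src tgt lab). \<forall>w\<in>language (sofic_shift E src tgt lab).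
            \<exists>v. length v = K \<and> P@v@w \<in> language (sofic_shift E src tgt lab)"
proof -
  define L where "L = language (sofic_shift E src tgt lab)"
  define pairs where "pairs = (\<lambda>(P,w). (TT E src tgt lab P, II E src tgt lab w)) ` (L \<times> L)"
  have "pairs \<subseteq> Pow E \<times> Pow E" unfolding pairs_def TT_def II_def isp_def by auto
  then have finp: "finite pairs" using fin by (meson finite_Pow_iff finite_SigmaI rev_finite_subset)
  define rep where "rep pr = (SOME Pw. Pw \<in> L \<times> L \<and> (\<lambda>(P,w). (TT E src tgt lab P, II E src tgt lab w)) Pw = pr)" for pr
  define f where "f pr = (SOME N. \<forall>n\<ge>N. \<exists>v. length v = n \<and> fst (rep pr) @ v @ snd (rep pr) \<in> L)" for pr
  define K where "K = Max (insert 0 (f ` pairs))"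
  show ?thesis unfolding L_def[symmetric]
  proof (rule exI[of _ K], intro ballI)
    fix P w assume P: "P \<in> L" and w: "w \<in> L"
    define pr where "pr = (TT E src tgt lab P, II E src tgt lab w)"
    have prin: "pr \<in> pairs" unfolding pairs_def pr_def using P w by force
    have "\<exists>Pw. Pw \<in> L \<times> L \<and> (\<lambda>(P,w). (TT E src tgt lab P, II E src tgt lab w)) Pw = pr"
      using P w unfolding pr_def by force
    then have repP: "rep pr \<in> L \<times> L \<and> (\<lambda>(P,w). (TT E src tgt lab P, II E src tgt lab w)) (rep pr) = pr"
      unfolding rep_def by (rule someI_ex)
    obtain P0 w0 where rp: "rep pr = (P0, w0)" by fastforce
    have P0: "P0 \<in> L" "w0 \<in> L" "TT E src tgt lab P0 = TT E src tgt lab P" "II E src tgt lab w0 = II E src tgt lab w"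
      using repP rp unfolding pr_def by auto
    have "\<exists>N. \<forall>n\<ge>N. \<exists>v. length v = n \<and> P0 @ v @ w0 \<in> L"
      using mix P0(1,2) unfolding top_mixing_def L_def by blast
    then have "\<forall>n\<ge>(SOME N. \<forall>n\<ge>N. \<exists>v. length v = n \<and> P0 @ v @ w0 \<in> L). \<exists>v. length v = n \<and> P0 @ v @ w0 \<in> L"
      by (rule someI_ex)
    moreover have "f pr = (SOME N. \<forall>n\<ge>N. \<exists>v. length v = n \<and> P0 @ v @ w0 \<in> L)"
      by (simp add: f_def rp)
    ultimately have "\<forall>n\<ge>f pr. \<exists>v. length v = n \<and> P0 @ v @ w0 \<in> L" by simp
    moreover have "f pr \<le> K" unfolding K_def using finp prin by simp
    ultimately obtain v where v: "length v = K" "P0 @ v @ w0 \<in> L" by blast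
    then obtain q where "isp E src tgt q" "mt lab (P0@v@w0) q" unfolding L_def lang_char by blast
    note tr = transfer[OF this P0(3,4)]
    have "P@v@w \<in> L" unfolding L_def lang_char using tr by blast
    with v(1) show "\<exists>v. length v = K \<and> P @ v @ w \<in> L" by blast
  qed
qed


lemma koenig:
  assumes fin: "finite E" and pre: "\<forall>n. \<exists>q. isp E src tgt q \<and> (\<forall>k<n. lab (q k) = y k)"
  shows "y \<in> sofic_shift E src tgt lab"
proof -
  define Q where "Q n = (SOME q. isp E src tgt q \<and> (\<forall>k<n. lab (q k) = y k))" for n
  have Q: "isp E src tgt (Q n) \<and> (\<forall>k<n. lab (Q n k) = y k)" for n
    unfolding Q_def using pre[rule_format, of n] by (rule someI_ex)
  define Good where "Good s \<longleftrightarrow> infinite {n. \<forall>k<length s. Q n k = s ! k}" for s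
  have step: "\<exists>e. e \<in> E \<and> Good (s@[e])" if "Good s" for s
  proof (rule ccontr)
    assume "\<not> ?thesis"
    then have fe: "finite {n. \<forall>k<length (s@[e]). Q n k = (s@[e]) ! k}" if "e \<in> E" for e
      using that unfolding Good_def by blast
    have "{n. \<forall>k<length s. Q n k = s ! k} \<subseteq> (\<Union>e\<in>E. {n. \<forall>k<length (s@[e]). Q n k = (s@[e]) ! k})"
    proof
      fix n assume n: "n \<in> {n. \<forall>k<length s. Q n k = s ! k}"
      have "Q n (length s) \<in> E" using Q unfolding isp_def by blast
      moreover have "\<forall>k<length (s@[Q n (length s)]). Q n k = (s@[Q n (length s)]) ! k"
        using n by (auto simp: nth_append less_Suc_eq)
      ultimately show "n \<in> (\<Union>e\<in>E. {n. \<forall>k<length (s@[e]). Q n k = (s@[e]) ! k})" by blast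
    qed
    moreover have "finite (\<Union>e\<in>E. {n. \<forall>k<length (s@[e]). Q n k = (s@[e]) ! k})"
      using fin fe by (intro finite_UN_I) auto
    ultimately show False using that unfolding Good_def by (meson finite_subset)
  qed
  define S where "S = rec_nat [] (\<lambda>m s. s @ [SOME e. e \<in> E \<and> Good (s@[e])])"
  have S0: "S 0 = []" and SS: "S (Suc m) = S m @ [SOME e. e \<in> E \<and> Good (S m @[e])]" for m
    unfolding S_def by simp_all
  have G: "Good (S m) \<and> length (S m) = m" for m
  proof (induction m)
    case 0 then show ?case unfolding S0 Good_def by simp
  next
    case (Suc m)
    then have "\<exists>e. e \<in> E \<and> Good (S m @ [e])" using step by blast
    then have "(SOME e. e \<in> E \<and> Good (S m @[e])) \<in> E \<and> Good (S m @ [SOME e. e \<in> E \<and> Good (S m @[e])])"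
      by (rule someI_ex)
    then show ?case using Suc SS by simp
  qed
  define c where "c k = S (Suc k) ! k" for k
  have Sc: "k < m \<Longrightarrow> S m ! k = c k" for k m
  proof (induction m)
    case 0 then show ?case by simp
  next
    case (Suc m)
    show ?case
    proof (cases "k < m")
      case True then show ?thesis using Suc G[of m] by (simp add: SS nth_append)
    next
      case False then have "k = m" using Suc by simp
      then show ?thesis unfolding c_def by simp
    qed
  qed
  have cp: "c k \<in> E \<and> tgt (c k) = src (c (Suc k)) \<and> y k = lab (c k)" for k
  proof -
    have "infinite {n. \<forall>j<length (S (k+2)). Q n j = S (k+2) ! j}" using G[of "k+2"] unfolding Good_def by blast
    then obtain n where n: "n > k+1" "\<forall>j<length (S (k+2)). Q n j = S (k+2) ! j"
      unfolding infinite_nat_iff_unbounded by blast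
    then have qn: "\<forall>j<k+2. Q n j = c j" using G[of "k+2"] Sc by simp
    have "Q n k \<in> E \<and> tgt (Q n k) = src (Q n (Suc k))" using Q[of n] unfolding isp_def by blast
    moreover have "lab (Q n k) = y k" using Q[of n] n(1) by simp
    ultimately show ?thesis using qn by simp
  qed
  show ?thesis unfolding sofic_shift_def using cp by blast
qed



lemma lang_drop: "P \<in> language (sofic_shift E src tgt lab) \<Longrightarrow> drop m P \<in> language (sofic_shift E src tgt lab)"
proof -
  assume "P \<in> language (sofic_shift E src tgt lab)"
  then obtain q where q: "isp E src tgt q" "mt lab (take m P @ drop m P) q" unfolding lang_char by auto
  then have "mt lab (drop m P) (\<lambda>k. q (k + length (take m P)))" unfolding mt_append by auto
  with isp_shift[OF q(1)] show ?thesis unfolding lang_char by blast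
qed

lemma ws_ge: assumes "\<forall>j. length (ws j) \<ge> N" shows "word_start ws j \<ge> j * N"
proof (induction j)
  case (Suc j)
  have "N \<le> length (ws j)" using assms by blast
  then show ?case using Suc by simp
qed simp

lemma ws_mono: "j \<le> j' \<Longrightarrow> word_start ws j \<le> word_start ws j'"
  by (induction j' rule: dec_induct) auto

lemma construct:
  assumes fin: "finite E"
    and K: "\<forall>P\<in>language (sofic_shift E src tgt lab). \<forall>w\<in>language (sofic_shift E src tgt lab).
            \<exists>v. length v = K \<and> P@v@w \<in> language (sofic_shift E src tgt lab)"
    and ws: "\<forall>j. ws j \<in> language (sofic_shift E src tgt lab) \<and> length (ws j) \<ge> N" and N: "N \<ge> K + 1"
  shows "\<exists>y\<in>sofic_shift E src tgt lab. \<forall>k. concat_words ws k \<noteq> y k \<longrightarrow>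
            (\<exists>j\<ge>1. word_start ws j \<le> k \<and> k < word_start ws j + K)"
proof -
  define L where "L = language (sofic_shift E src tgt lab)"
  define V where "V j Pj = (SOME v. length v = K \<and> Pj @ v @ drop K (ws (Suc j)) \<in> L)" for j Pj
  define P where "P = rec_nat (ws 0) (\<lambda>j Pj. Pj @ V j Pj @ drop K (ws (Suc j)))"
  have P0: "P 0 = ws 0" and PS: "P (Suc j) = P j @ V j (P j) @ drop K (ws (Suc j))" for j
    unfolding P_def by simp_all
  have PL: "P j \<in> L \<and> length (P j) = word_start ws (Suc j)" for j
  proof (induction j)
    case 0 then show ?case using ws unfolding L_def by (simp add: P0)
  next
    case (Suc j)
    have "drop K (ws (Suc j)) \<in> L" using ws lang_drop unfolding L_def by blast
    then have "\<exists>v. length v = K \<and> P j @ v @ drop K (ws (Suc j)) \<in> L"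
      using K Suc unfolding L_def by blast
    then have "length (V j (P j)) = K \<and> P j @ V j (P j) @ drop K (ws (Suc j)) \<in> L"
      unfolding V_def by (rule someI_ex)
    moreover have "length (ws (Suc j)) \<ge> K" using ws[rule_format, of "Suc j"] N by simp
    ultimately show ?case using Suc by (simp add: PS)
  qed
  have pref: "P j' ! k = P j ! k" if kj: "k < length (P j)" and jj: "j \<le> j'" for k j j'
    using jj
  proof (induction j' rule: dec_induct)
    case base then show ?case by simp
  next
    case (step i)
    have "length (P j) \<le> length (P i)" using PL ws_mono step(1) by (metis Suc_le_mono)
    then show ?case using step kj by (simp add: PS nth_append)
  qed
  have pref2: "k < length (P j) \<Longrightarrow> k < length (P j') \<Longrightarrow> P j' ! k = P j ! k" for k j j'
    using pref by (metis nat_le_linear)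
  have lenP: "k < length (P k)" for k
  proof -
    have "Suc k * N \<le> length (P k)" using PL ws_ge ws by metis
    moreover have "Suc k \<le> Suc k * N" using N by (metis One_nat_def Suc_le_eq add_gr_0 less_one mult_le_mono2 nat_mult_1_right zero_less_iff_neq_zero le_trans le_add2)
    ultimately show ?thesis by simp
  qed
  define y where "y k = P k ! k" for k
  have yin: "y \<in> sofic_shift E src tgt lab"
  proof (rule koenig[OF fin], rule allI)
    fix n
    obtain q where q: "isp E src tgt q" "mt lab (P n) q" using PL[of n] unfolding L_def lang_char by blast
    have "\<forall>k<n. lab (q k) = y k"
    proof (intro allI impI)
      fix k assume "k < n"
      then have "k < length (P n)" using lenP[of n] by simp
      then show "lab (q k) = y k" using q(2) pref2[OF lenP[of k]] unfolding mt_def y_def by metis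
    qed
    then show "\<exists>q. isp E src tgt q \<and> (\<forall>k<n. lab (q k) = y k)" using q by blast
  qed
  have "concat_words ws k \<noteq> y k \<longrightarrow> (\<exists>j\<ge>1. word_start ws j \<le> k \<and> k < word_start ws j + K)" for k
  proof
    assume ne: "concat_words ws k \<noteq> y k"
    define j where "j = (LEAST j. k < word_start ws (Suc j))"
    have ex: "k < word_start ws (Suc k)" using lenP[of k] PL[of k] by simp
    have j1: "k < word_start ws (Suc j)" unfolding j_def by (rule LeastI[of "\<lambda>j. k < word_start ws (Suc j)", OF ex])
    have cw: "concat_words ws k = ws j ! (k - word_start ws j)"
      unfolding concat_words_def j_def Let_def by simp
    have kP: "k < length (P j)" using PL[of j] j1 by simp
    have yk: "y k = P j ! k" unfolding y_def using pref2[OF kP lenP[of k]] .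
    show "\<exists>j\<ge>1. word_start ws j \<le> k \<and> k < word_start ws j + K"
    proof (cases j)
      case 0 then show ?thesis using ne cw yk by (simp add: P0)
    next
      case (Suc i)
      have j0: "word_start ws j \<le> k"
        using not_less_Least[of i "\<lambda>j. k < word_start ws (Suc j)"] Suc unfolding j_def by simp
      have "\<not> (k \<ge> word_start ws j + K)"
      proof
        assume ge: "k \<ge> word_start ws j + K"
        have lPi: "length (P i) = word_start ws j" using PL[of i] Suc by simp
        have lV: "length (V i (P i)) = K"
        proof -
          have "drop K (ws (Suc i)) \<in> L" using ws lang_drop unfolding L_def by blast
          then have "\<exists>v. length v = K \<and> P i @ v @ drop K (ws (Suc i)) \<in> L"
            using K PL unfolding L_def by blast
          then have "length (V i (P i)) = K \<and> P i @ V i (P i) @ drop K (ws (Suc i)) \<in> L"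
            unfolding V_def by (rule someI_ex)
          then show ?thesis by simp
        qed
        have Kle: "length (ws j) \<ge> K" using ws[rule_format, of j] N by simp
        have e1: "P j = (P i @ V i (P i)) @ drop K (ws j)" by (simp add: PS Suc)
        have e2: "length (P i @ V i (P i)) = word_start ws j + K" using lPi lV by simp
        have "P j ! k = drop K (ws j) ! (k - (word_start ws j + K))"
          unfolding e1 using ge e2 by (metis not_le nth_append)
        also have "\<dots> = ws j ! (K + (k - (word_start ws j + K)))"
          using Kle by (rule nth_drop)
        also have "K + (k - (word_start ws j + K)) = k - word_start ws j" using ge by simp
        finally show False using ne cw yk by simp
      qed
      then show ?thesis using j0 Suc by auto
    qed
  qed
  then show ?thesis using yin by blast
qed



lemma count_bound:
  assumes mis: "\<forall>k. cw k \<noteq> y k \<longrightarrow> (\<exists>j\<ge>1. word_start ws j \<le> k \<and> k < word_start ws j + K)"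
    and ws: "\<forall>j. length (ws j) \<ge> N" and N: "N \<ge> 1"
  shows "card {j. j < n \<and> cw j \<noteq> y j} * N \<le> n * K"
proof -
  have sub: "{j. j < n \<and> cw j \<noteq> y j} \<subseteq> (\<Union>j\<in>{1..n div N}. {word_start ws j..<word_start ws j + K})"
  proof
    fix k assume "k \<in> {j. j < n \<and> cw j \<noteq> y j}"
    then have kn: "k < n" and "cw k \<noteq> y k" by auto
    then obtain j where j: "j \<ge> 1" "word_start ws j \<le> k" "k < word_start ws j + K" using mis by blast
    have "j * N \<le> word_start ws j" using ws_ge[OF ws] .
    then have "j * N \<le> n" using j kn by simp
    then have "j * N div N \<le> n div N" by (rule div_le_mono)
    then have "j \<le> n div N" using N by simp
    then show "k \<in> (\<Union>j\<in>{1..n div N}. {word_start ws j..<word_start ws j + K})" using j by auto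
  qed
  have "card {j. j < n \<and> cw j \<noteq> y j} \<le> card (\<Union>j\<in>{1..n div N}. {word_start ws j..<word_start ws j + K})"
    by (rule card_mono[OF _ sub]) auto
  also have "\<dots> \<le> (\<Sum>j\<in>{1..n div N}. card {word_start ws j..<word_start ws j + K})"
    by (rule card_UN_le) simp
  also have "\<dots> = (n div N) * K" by simp
  finally have "card {j. j < n \<and> cw j \<noteq> y j} * N \<le> (n div N) * K * N" by simp
  also have "\<dots> = (n div N * N) * K" by simp
  also have "\<dots> \<le> n * K" by (simp add: div_times_less_eq_dividend)
  finally show ?thesis .
qed

theorem mainTheorem4:
  fixes E :: "'e set" and src tgt :: "'e \<Rightarrow> 'v" and lab :: "'e \<Rightarrow> 'a"
  assumes "finite E"
    and "top_mixing (sofic_shift E src tgt lab)"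
  shows "dbar_shadowing (sofic_shift E src tgt lab)"
proof -
  obtain K where K: "\<forall>P\<in>language (sofic_shift E src tgt lab). \<forall>w\<in>language (sofic_shift E src tgt lab).
            \<exists>v. length v = K \<and> P@v@w \<in> language (sofic_shift E src tgt lab)"
    using uniform[OF assms] by blast
  show ?thesis unfolding dbar_shadowing_def
  proof (intro allI impI)
    fix \<epsilon> :: real assume e: "\<epsilon> > 0"
    define N where "N = K + 1 + nat \<lceil>real K / \<epsilon>\<rceil>"
    have N1: "N \<ge> K + 1" "N \<ge> 1" unfolding N_def by auto
    have "real N \<ge> real K / \<epsilon> + 1" unfolding N_def by linarith
    then have "real N * \<epsilon> > real K" using e by (simp add: field_simps)
    then have KN: "real K / real N < \<epsilon>" using N1 by (simp add: divide_simps mult.commute)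
    show "\<exists>N::nat. N \<ge> 1 \<and> (\<forall>ws :: nat \<Rightarrow> 'a list. (\<forall>j. ws j \<in> language (sofic_shift E src tgt lab) \<and> length (ws j) \<ge> N) \<longrightarrow>
           (\<exists>x'\<in>sofic_shift E src tgt lab. dbar (concat_words ws) x' < ereal \<epsilon>))"
    proof (intro exI[of _ N] conjI allI impI)
      show "N \<ge> 1" by (rule N1(2))
      fix ws :: "nat \<Rightarrow> 'a list"
      assume ws: "\<forall>j. ws j \<in> language (sofic_shift E src tgt lab) \<and> length (ws j) \<ge> N"
      obtain y where y: "y \<in> sofic_shift E src tgt lab" and mis: "\<forall>k. concat_words ws k \<noteq> y k \<longrightarrow>
            (\<exists>j\<ge>1. word_start ws j \<le> k \<and> k < word_start ws j + K)"
        using construct[OF assms(1) K ws N1(1)] by blast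
      have wsN: "\<forall>j. length (ws j) \<ge> N" using ws by blast
      have bnd: "ereal (real (card {j. j < n \<and> concat_words ws j \<noteq> y j}) / real n) \<le> ereal (real K / real N)" for n
      proof (cases "n = 0")
        case True then show ?thesis by simp
      next
        case False
        have "card {j. j < n \<and> concat_words ws j \<noteq> y j} * N \<le> n * K"
          by (rule count_bound[OF mis wsN N1(2)])
        then have "real (card {j. j < n \<and> concat_words ws j \<noteq> y j}) * real N \<le> real n * real K"
          by (metis of_nat_le_iff of_nat_mult)
        then show ?thesis using False N1 by (simp add: divide_simps mult.commute)
      qed
      have "dbar (concat_words ws) y \<le> ereal (real K / real N)"
        unfolding dbar_def by (rule Limsup_bounded, rule always_eventually, rule allI, rule bnd)
      also have "\<dots> < ereal \<epsilon>" using KN by simp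
      finally show "\<exists>x'\<in>sofic_shift E src tgt lab. dbar (concat_words ws) x' < ereal \<epsilon>" using y by blast
    qed
  qed
qed


end
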